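(* Let $l\in\{1,2,3\}$ and $\lambda_0>0$. Let the base stations be the points of a homogeneous Poisson point process in $\mathbb R^l$ with intensity $\lambda_0$, with a mobile station at the origin, all transmission powers and shadow fading factors equal to $1$. For an increasing path-loss function $h$, let $\left(\frac CI\right)_h=\frac{1/h(R_1)}{\sum_{i\ge2}1/h(R_i)}$, where $R_1\le R_2\le\cdots$ are the ordered distances of the base stations from the origin. Let $h_1(r)=r^{\varepsilon_1}$ for $r\ge0$ and $h_2(r)=r^{\varepsilon_1}$ for $r\le1$, $h_2(r)=r^{\varepsilon_2}$ for $r>1$, and write $\left(\frac CI\right)_i=\left(\frac CI\right)_{h_i}$. If $\varepsilon_2>\varepsilon_1>l$, then $\left(\frac CI\right)_1\le_{\mathrm{st}}\left(\frac CI\right)_2$. If $\varepsilon_1>\varepsilon_2>l$, then $\left(\frac CI\right)_1\ge_{\mathrm{st}}\left(\frac CI\right)_2$.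
   Context: The mobile is served by the BS with strongest received power (the nearest one) and all other BSs interfere; received power at distance $R$ is $1/h(R)$. For random variables $X,Y$, $X\le_{\mathrm{st}}Y$ means $\mathbb P(X>x)\le\mathbb P(Y>x)$ for all real $x$, and $X\ge_{\mathrm{st}}Y$ means $Y\le_{\mathrm{st}}X$. *)

theory Defs
  imports "HOL-Probability.Probability"
begin

definition pcount :: "'a set \<Rightarrow> 'a set \<Rightarrow> nat" where
  "pcount P B = card (P \<inter> B)"

definition hppp :: "'b measure \<Rightarrow> real \<Rightarrow> ('b \<Rightarrow> 'a::euclidean_space set) \<Rightarrow> bool" where
  "hppp M lam Phi \<longleftrightarrow>
     (\<forall>\<omega>\<in>space M. \<forall>B. bounded B \<longrightarrow> finite (Phi \<omega> \<inter> B)) \<and>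
     (\<forall>B\<in>sets (borel :: 'a measure). bounded B \<longrightarrow>
        (\<lambda>\<omega>. pcount (Phi \<omega>) B) \<in> measurable M (count_space UNIV) \<and>
        (\<forall>k::nat. measure M {\<omega>\<in>space M. pcount (Phi \<omega>) B = k}
            = exp (- (lam * measure lborel B)) * (lam * measure lborel B) ^ k / fact k)) \<and>
     (\<forall>(I::nat set) (Bs::nat \<Rightarrow> 'a set).
        finite I \<and> (\<forall>i\<in>I. Bs i \<in> sets borel \<and> bounded (Bs i)) \<and> disjoint_family_on Bs I \<longrightarrow>
        prob_space.indep_vars M (\<lambda>_. count_space UNIV) (\<lambda>i \<omega>. pcount (Phi \<omega>) (Bs i)) I)"

text \<open>k-th smallest distance (k \<ge> 1, counted with multiplicity) of the points of P
  from the origin.\<close>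
definition ord_dist :: "'a::real_normed_vector set \<Rightarrow> nat \<Rightarrow> real" where
  "ord_dist P k = Inf {r. 0 \<le> r \<and> k \<le> card {x\<in>P. norm x \<le> r}}"

definition CI :: "(real \<Rightarrow> real) \<Rightarrow> 'a::real_normed_vector set \<Rightarrow> real" where
  "CI h P = (1 / h (ord_dist P 1)) / (\<Sum>i. 1 / h (ord_dist P (i + 2)))"

definition st_le :: "'b measure \<Rightarrow> ('b \<Rightarrow> real) \<Rightarrow> ('b \<Rightarrow> real) \<Rightarrow> bool" where
  "st_le M X Y \<longleftrightarrow> (\<forall>x::real. measure M {\<omega>\<in>space M. X \<omega> > x} \<le> measure M {\<omega>\<in>space M. Y \<omega> > x})"

definition h_one :: "real \<Rightarrow> real \<Rightarrow> real" where
  "h_one e1 r = r powr e1"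

definition h_two :: "real \<Rightarrow> real \<Rightarrow> real \<Rightarrow> real" where
  "h_two e1 e2 r = (if r \<le> 1 then r powr e1 else r powr e2)"

end

theory Submission
  imports Defs
begin

definition Nr :: "'a::real_normed_vector set \<Rightarrow> real \<Rightarrow> nat" where
  "Nr P r = card {x\<in>P. norm x \<le> r}"

definition locfin :: "'a::real_normed_vector set \<Rightarrow> bool" where
  "locfin P \<longleftrightarrow> (\<forall>r. finite {x\<in>P. norm x \<le> r})"

definition Sk :: "'a::real_normed_vector set \<Rightarrow> nat \<Rightarrow> real set" where
  "Sk P k = {r. 0 \<le> r \<and> k \<le> Nr P r}"

lemma Nr_mono: "locfin P \<Longrightarrow> r \<le> s \<Longrightarrow> Nr P r \<le> Nr P s"
  unfolding Nr_def locfin_def by (intro card_mono) auto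

lemma ord_dist_Sk: "ord_dist P k = Inf (Sk P k)"
  by (simp add: ord_dist_def Sk_def Nr_def)

lemma Sk_bdd: "bdd_below (Sk P k)"
  unfolding Sk_def bdd_below_def by auto

lemma Sk_up: "locfin P \<Longrightarrow> r \<in> Sk P k \<Longrightarrow> r \<le> s \<Longrightarrow> s \<in> Sk P k"
  unfolding Sk_def using Nr_mono[of P r s] by auto

lemma ord_dist_nonneg: "Sk P k \<noteq> {} \<Longrightarrow> 0 \<le> ord_dist P k"
  unfolding ord_dist_Sk by (rule cInf_greatest) (auto simp: Sk_def)

lemma ord_dist_less: 
  assumes "locfin P" "Sk P k \<noteq> {}" "ord_dist P k < t" shows "k \<le> Nr P t"
proof -
  obtain s where "s \<in> Sk P k" "s < t" using cInf_lessD[of "Sk P k" t] assms by (auto simp: ord_dist_Sk)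
  then show ?thesis using Sk_up[OF assms(1), of s k t] by (auto simp: Sk_def)
qed

lemma ord_dist_ge:
  assumes "locfin P" "Sk P k \<noteq> {}" "Nr P t < k" shows "t \<le> ord_dist P k"
  using ord_dist_less[OF assms(1,2), of t] assms(3) by force

lemma ord_dist_mono:
  assumes "Sk P k' \<noteq> {}" "k \<le> k'" shows "ord_dist P k \<le> ord_dist P k'"
  unfolding ord_dist_Sk
  by (rule cInf_superset_mono[OF assms(1) Sk_bdd]) (use assms(2) in \<open>auto simp: Sk_def\<close>)

lemma exists_pow_between:
  fixes x :: real assumes "x > 1"
  shows "\<exists>n. 2^n < x \<and> x \<le> 2^(Suc n)"
proof -
  have "\<exists>m. x < (2::real)^m" by (rule real_arch_pow) simp
  then obtain m where m: "x \<le> 2^m" by (auto intro: less_imp_le)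
  define k where "k = (LEAST n. x \<le> (2::real)^n)"
  have k: "x \<le> 2^k" unfolding k_def by (rule LeastI[of _ m]) (rule m)
  have "k \<noteq> 0" using k assms by (metis not_le power_0)
  then obtain n where n: "k = Suc n" by (cases k) auto
  have "\<not> x \<le> 2^n" using not_less_Least[of n "\<lambda>n. x \<le> (2::real)^n"] n unfolding k_def by auto
  then show ?thesis using k n by (intro exI[of _ n]) auto
qed

lemma summable_od:
  fixes P :: "'a::real_normed_vector set"
  assumes lf: "locfin P" and ne: "\<And>k. Sk P k \<noteq> {}" and l: "0 < l" "l < e"
    and ev: "\<And>n. n \<ge> n0 \<Longrightarrow> real (Nr P (2^n)) \<le> 2 powr (real n * l)"
  shows "summable (\<lambda>i. 1 / (ord_dist P (i+2) powr e))"
proof (rule summable_comparison_test_ev)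
  define g where "g i = 2 powr e * real (i+2) powr (- (e/l))" for i :: nat
  have s1: "summable (\<lambda>i. real i powr (- (e/l)))"
    using l by (subst summable_real_powr_iff) (auto simp: field_simps)
  have "summable (\<lambda>i. real (i+2) powr (- (e/l)))"
    using summable_ignore_initial_segment[OF s1, of 2] by simp
  then show "summable g" unfolding g_def by (rule summable_mult)
  obtain N :: nat where N: "2 powr (real n0 * l) < real N"
    using reals_Archimedean2 by blast
  show "\<forall>\<^sub>F i in sequentially. norm (1 / (ord_dist P (i+2) powr e)) \<le> g i"
    unfolding eventually_sequentially
  proof (intro exI[of _ N] allI impI)
    fix i assume iN: "N \<le> i"
    define j where "j = real (i+2)"
    have jpos: "j > 0" unfolding j_def by simp
    have j0: "2 powr (real n0 * l) < j" using N iN unfolding j_def by linarith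
    define x where "x = j powr (1/l)"
    have xpos: "x > 0" unfolding x_def using jpos by simp
    have xl: "x powr l = j" unfolding x_def using jpos l by (simp add: powr_powr)
    have x0: "2^n0 < x"
    proof -
      have "(2::real)^n0 = (2 powr (real n0 * l)) powr (1/l)"
        using l by (simp add: powr_powr powr_realpow)
      also have "\<dots> < j powr (1/l)"
        using j0 l by (intro powr_less_mono2) auto
      finally show ?thesis unfolding x_def .
    qed
    have "x > 1" using x0 by (smt (verit) one_le_power)
    then obtain n where n: "2^n < x" "x \<le> 2^(Suc n)" using exists_pow_between by blast
    have "n0 < Suc n"
    proof (rule ccontr)
      assume "\<not> n0 < Suc n"
      then have "(2::real)^(Suc n) \<le> 2^n0" by (intro power_increasing) auto
      then show False using n x0 by linarith
    qed
    then have "real (Nr P (2^n)) \<le> 2 powr (real n * l)" using ev by auto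
    also have "\<dots> = (2^n) powr l" by (simp add: powr_powr powr_realpow[symmetric] mult.commute)
    also have "\<dots> < x powr l" using n l by (intro powr_less_mono2) auto
    finally have "Nr P (2^n) < i + 2" using xl unfolding j_def by linarith
    then have R: "2^n \<le> ord_dist P (i+2)" using ord_dist_ge[OF lf ne] by blast
    have x2: "x / 2 \<le> ord_dist P (i+2)" using R n by simp
    have "1 / (ord_dist P (i+2) powr e) \<le> 1 / ((x/2) powr e)"
      using x2 xpos l by (intro divide_left_mono powr_mono2 mult_pos_pos) auto
    also have "\<dots> = 2 powr e * x powr (-e)"
      using xpos by (simp add: powr_divide powr_minus divide_simps)
    also have "x powr (-e) = j powr (- (e/l))"
      unfolding x_def using jpos by (simp add: powr_powr)
    finally show "norm (1 / (ord_dist P (i+2) powr e)) \<le> g i"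
      unfolding g_def j_def by simp
  qed
qed

lemma ratio_le:
  fixes a b :: "nat \<Rightarrow> real"
  assumes a0: "\<And>i. 0 \<le> a i" and b0: "\<And>i. 0 \<le> b i" and x1: "0 \<le> x1" and x2: "0 \<le> x2"
    and cr: "\<And>i. x1 * b i \<le> x2 * a i" and z: "\<And>i. b i = 0 \<Longrightarrow> a i = 0"
    and sa: "summable a" and sb: "summable b"
  shows "x1 / suminf a \<le> x2 / suminf b"
proof (cases "x1 = 0")
  case True then show ?thesis using x2 suminf_nonneg[OF sb b0] by simp
next
  case False
  then have x1p: "x1 > 0" using x1 by simp
  have Sa: "suminf a \<ge> 0" using suminf_nonneg[OF sa a0] .
  have Sb: "suminf b \<ge> 0" using suminf_nonneg[OF sb b0] .
  show ?thesis
  proof (cases "suminf b = 0")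
    case True
    then have "\<forall>i. b i = 0" using suminf_eq_zero_iff[OF sb] b0 by blast
    then have "\<forall>i. a i = 0" using z by blast
    then have "a = (\<lambda>_. 0)" by auto
    then have "suminf a = 0" by simp
    then show ?thesis using True by simp
  next
    case False
    then have Sbp: "suminf b > 0" using Sb by simp
    have "x1 * suminf b = suminf (\<lambda>i. x1 * b i)" using suminf_mult[OF sb] by simp
    also have "\<dots> \<le> suminf (\<lambda>i. x2 * a i)"
      using cr by (intro suminf_le summable_mult sa sb) auto
    also have "\<dots> = x2 * suminf a" using suminf_mult[OF sa] by simp
    finally have le: "x1 * suminf b \<le> x2 * suminf a" .
    then have "suminf a \<noteq> 0" using x1p Sbp by (auto dest: mult_pos_pos[of x1 "suminf b"])
    then have Sap: "suminf a > 0" using Sa by simp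
    show ?thesis using le Sap Sbp by (simp add: divide_simps mult.commute)
  qed
qed

lemma key_powr:
  fixes r R p q :: real
  assumes "0 < r" "r \<le> R" "p \<le> q"
  shows "r powr q * R powr p \<le> r powr p * R powr q"
proof -
  have "r powr q * R powr p = r powr p * r powr (q - p) * R powr p"
    by (simp add: powr_add[symmetric])
  also have "\<dots> \<le> r powr p * R powr (q - p) * R powr p"
    using assms by (intro mult_right_mono mult_left_mono powr_mono2) auto
  also have "\<dots> = r powr p * R powr q"
    by (simp add: powr_add[symmetric] mult.assoc)
  finally show ?thesis .
qed

lemma inv_cross:
  fixes a b c d :: real
  assumes "0 < a" "0 < b" "0 < c" "0 < d" "c * b \<le> a * d"
  shows "(1/a) * (1/d) \<le> (1/c) * (1/b)"
  using assms by (simp add: divide_simps)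

lemma cross1:
  assumes "e1 < e2" "0 \<le> r" "r \<le> R"
  shows "(1 / h_one e1 r) * (1 / h_two e1 e2 R) \<le> (1 / h_two e1 e2 r) * (1 / h_one e1 R)"
proof (cases "r = 0")
  case True then show ?thesis by (simp add: h_one_def h_two_def)
next
  case False
  then have r: "0 < r" "0 < R" using assms by auto
  have "h_two e1 e2 r * h_one e1 R \<le> h_one e1 r * h_two e1 e2 R"
  proof (cases "R \<le> 1")
    case True then show ?thesis using assms by (simp add: h_one_def h_two_def)
  next
    case R1: False
    show ?thesis
    proof (cases "r \<le> 1")
      case True
      have "R powr e1 \<le> R powr e2" using R1 assms by (intro powr_mono) auto
      then have "r powr e1 * R powr e1 \<le> r powr e1 * R powr e2" by (rule mult_left_mono) simp
      then show ?thesis using True R1 r by (simp add: h_one_def h_two_def)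
    next
      case False
      then show ?thesis using R1 r assms key_powr[of r R e1 e2] by (simp add: h_one_def h_two_def)
    qed
  qed
  then show ?thesis using r by (intro inv_cross) (auto simp: h_one_def h_two_def)
qed

lemma cross2:
  assumes "e2 < e1" "0 \<le> r" "r \<le> R"
  shows "(1 / h_two e1 e2 r) * (1 / h_one e1 R) \<le> (1 / h_one e1 r) * (1 / h_two e1 e2 R)"
proof (cases "r = 0")
  case True then show ?thesis by (simp add: h_one_def h_two_def)
next
  case False
  then have r: "0 < r" "0 < R" using assms by auto
  have "h_one e1 r * h_two e1 e2 R \<le> h_two e1 e2 r * h_one e1 R"
  proof (cases "R \<le> 1")
    case True then show ?thesis using assms by (simp add: h_one_def h_two_def)
  next
    case R1: False
    show ?thesis
    proof (cases "r \<le> 1")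
      case True
      have "R powr e2 \<le> R powr e1" using R1 assms by (intro powr_mono) auto
      then have "r powr e1 * R powr e2 \<le> r powr e1 * R powr e1" by (rule mult_left_mono) simp
      then show ?thesis using True R1 r by (simp add: h_one_def h_two_def)
    next
      case False
      then show ?thesis using R1 r assms key_powr[of r R e2 e1] by (simp add: h_one_def h_two_def mult.commute)
    qed
  qed
  then show ?thesis using r by (intro inv_cross) (auto simp: h_one_def h_two_def)
qed

lemma CI_le_gen:
  fixes P :: "'a::real_normed_vector set"
  assumes lf: "locfin P" and ne: "\<And>k. Sk P k \<noteq> {}"
    and sa: "summable (\<lambda>i. 1 / hX (ord_dist P (i+2)))"
    and sb: "summable (\<lambda>i. 1 / hY (ord_dist P (i+2)))"
    and hX: "\<And>r. 0 \<le> r \<Longrightarrow> 0 \<le> hX r" and hY: "\<And>r. 0 \<le> r \<Longrightarrow> 0 \<le> hY r"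
    and z: "\<And>r. 0 \<le> r \<Longrightarrow> hY r = 0 \<Longrightarrow> hX r = 0"
    and cr: "\<And>r R. 0 \<le> r \<Longrightarrow> r \<le> R \<Longrightarrow> (1/hX r) * (1/hY R) \<le> (1/hY r) * (1/hX R)"
  shows "CI hX P \<le> CI hY P"
  unfolding CI_def
proof (rule ratio_le)
  have nn: "0 \<le> ord_dist P k" for k using ord_dist_nonneg[OF ne] .
  have mo: "ord_dist P 1 \<le> ord_dist P (i+2)" for i by (rule ord_dist_mono[OF ne]) simp
  show "0 \<le> 1 / hX (ord_dist P (i + 2))" for i using hX[OF nn] by simp
  show "0 \<le> 1 / hY (ord_dist P (i + 2))" for i using hY[OF nn] by simp
  show "0 \<le> 1 / hX (ord_dist P 1)" using hX[OF nn] by simp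
  show "0 \<le> 1 / hY (ord_dist P 1)" using hY[OF nn] by simp
  show "1 / hX (ord_dist P 1) * (1 / hY (ord_dist P (i + 2))) \<le> 1 / hY (ord_dist P 1) * (1 / hX (ord_dist P (i + 2)))" for i
    using cr[OF nn mo] .
  show "1 / hX (ord_dist P (i + 2)) = 0" if "1 / hY (ord_dist P (i + 2)) = 0" for i
    using that z[OF nn] by simp
qed (use sa sb in auto)


lemma Nr_pcount: "Nr P r = pcount P (cball 0 r)"
  unfolding Nr_def pcount_def by (rule arg_cong[where f=card]) (auto simp: mem_cball_0)

lemma ord_dist_meas:
  fixes Phi :: "'b \<Rightarrow> 'a::real_normed_vector set"
  assumes lf: "\<And>\<omega>. \<omega> \<in> space M \<Longrightarrow> locfin (Phi \<omega>)"
    and Nm[measurable]: "\<And>r. (\<lambda>\<omega>. real (Nr (Phi \<omega>) r)) \<in> borel_measurable M"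
  shows "(\<lambda>\<omega>. ord_dist (Phi \<omega>) k) \<in> borel_measurable M"
proof (subst borel_measurable_iff_less, intro allI)
  fix t :: real
  have eq: "{\<omega>\<in>space M. ord_dist (Phi \<omega>) k < t} =
    {\<omega>\<in>space M. \<exists>q::rat. 0 \<le> real_of_rat q \<and> real_of_rat q < t \<and> real k \<le> real (Nr (Phi \<omega>) (real_of_rat q))} \<union>
    {\<omega>\<in>space M. (\<forall>n::nat. real (Nr (Phi \<omega>) (real n)) < real k) \<and> Inf ({}::real set) < t}"
  proof (intro set_eqI iffI)
    fix \<omega> assume w: "\<omega> \<in> {\<omega>\<in>space M. ord_dist (Phi \<omega>) k < t}"
    then have sp: "\<omega> \<in> space M" and lt: "ord_dist (Phi \<omega>) k < t" by auto
    show "\<omega> \<in> {\<omega>\<in>space M. \<exists>q::rat. 0 \<le> real_of_rat q \<and> real_of_rat q < t \<and> real k \<le> real (Nr (Phi \<omega>) (real_of_rat q))} \<union>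
    {\<omega>\<in>space M. (\<forall>n::nat. real (Nr (Phi \<omega>) (real n)) < real k) \<and> Inf ({}::real set) < t}"
    proof (cases "Sk (Phi \<omega>) k = {}")
      case True
      then have "Inf ({}::real set) < t" using lt by (simp add: ord_dist_Sk)
      moreover have "real (Nr (Phi \<omega>) (real n)) < real k" for n
        using True unfolding Sk_def by (auto simp: not_le[symmetric])
      ultimately show ?thesis using sp by auto
    next
      case False
      obtain s where s: "s \<in> Sk (Phi \<omega>) k" "s < t"
        using cInf_lessD[OF False] lt by (auto simp: ord_dist_Sk)
      obtain q where q: "q \<in> \<rat>" "s < q" "q < t" using Rats_dense_in_real[OF s(2)] by blast
      then obtain q' where q': "q = real_of_rat q'" by (auto simp: Rats_def)
      have "q \<in> Sk (Phi \<omega>) k" using Sk_up[OF lf[OF sp] s(1)] q by auto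
      then show ?thesis using sp q q' by (auto simp: Sk_def intro!: exI[of _ q'])
    qed
  next
    fix \<omega> assume "\<omega> \<in> {\<omega>\<in>space M. \<exists>q::rat. 0 \<le> real_of_rat q \<and> real_of_rat q < t \<and> real k \<le> real (Nr (Phi \<omega>) (real_of_rat q))} \<union>
    {\<omega>\<in>space M. (\<forall>n::nat. real (Nr (Phi \<omega>) (real n)) < real k) \<and> Inf ({}::real set) < t}"
    then have sp: "\<omega> \<in> space M" and
      c: "(\<exists>q::rat. 0 \<le> real_of_rat q \<and> real_of_rat q < t \<and> real k \<le> real (Nr (Phi \<omega>) (real_of_rat q))) \<or>
          ((\<forall>n::nat. real (Nr (Phi \<omega>) (real n)) < real k) \<and> Inf ({}::real set) < t)" by auto
    show "\<omega> \<in> {\<omega>\<in>space M. ord_dist (Phi \<omega>) k < t}"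
    proof (cases "Sk (Phi \<omega>) k = {}")
      case True
      have "\<not> (\<exists>q::rat. 0 \<le> real_of_rat q \<and> real_of_rat q < t \<and> real k \<le> real (Nr (Phi \<omega>) (real_of_rat q)))"
        using True by (auto simp: Sk_def)
      then show ?thesis using c True sp by (auto simp: ord_dist_Sk)
    next
      case False
      then obtain r where r: "r \<in> Sk (Phi \<omega>) k" by auto
      obtain n :: nat where "r \<le> real n" using real_arch_simple by blast
      then have "real n \<in> Sk (Phi \<omega>) k" using Sk_up[OF lf[OF sp] r] by auto
      then have "\<not> (\<forall>n::nat. real (Nr (Phi \<omega>) (real n)) < real k)" by (auto simp: Sk_def not_less)
      then obtain q :: rat where q: "0 \<le> real_of_rat q" "real_of_rat q < t" "real k \<le> real (Nr (Phi \<omega>) (real_of_rat q))"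
        using c by auto
      then have "real_of_rat q \<in> Sk (Phi \<omega>) k" by (auto simp: Sk_def)
      then have "ord_dist (Phi \<omega>) k \<le> real_of_rat q" unfolding ord_dist_Sk by (rule cInf_lower[OF _ Sk_bdd])
      then show ?thesis using q sp by auto
    qed
  qed
  show "{\<omega>\<in>space M. ord_dist (Phi \<omega>) k < t} \<in> sets M"
    unfolding eq by measurable
qed

lemma h_one_meas[measurable]: "h_one e \<in> borel_measurable borel"
  unfolding h_one_def[abs_def] by measurable

lemma h_two_meas[measurable]: "h_two e1 e2 \<in> borel_measurable borel"
  unfolding h_two_def[abs_def] by measurable

lemma CI_meas:
  fixes Phi :: "'b \<Rightarrow> 'a::real_normed_vector set"
  assumes lf: "\<And>\<omega>. \<omega> \<in> space M \<Longrightarrow> locfin (Phi \<omega>)"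
    and Nm: "\<And>r. (\<lambda>\<omega>. real (Nr (Phi \<omega>) r)) \<in> borel_measurable M"
    and h[measurable]: "h \<in> borel_measurable borel"
  shows "(\<lambda>\<omega>. CI h (Phi \<omega>)) \<in> borel_measurable M"
proof -
  have [measurable]: "(\<lambda>\<omega>. ord_dist (Phi \<omega>) k) \<in> borel_measurable M" for k
    by (rule ord_dist_meas[OF lf Nm])
  show ?thesis unfolding CI_def by measurable
qed


lemma pois_tail:
  assumes P: "prob_space M" and Xm[measurable]: "X \<in> measurable M (count_space UNIV)"
    and pm: "\<And>k. measure M {\<omega>\<in>space M. X \<omega> = k} = exp (- \<mu>) * \<mu> ^ k / fact k"
    and mu: "0 \<le> \<mu>" and m: "0 < m"
  shows "measure M {\<omega>\<in>space M. m < X \<omega>} \<le> \<mu> / real m"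
proof -
  interpret prob_space M by (rule P)
  define A where "A j = {\<omega>\<in>space M. X \<omega> = m + 1 + j}" for j
  define B where "B j = {\<omega>\<in>space M. X \<omega> = m + j}" for j
  have As: "range A \<subseteq> sets M" unfolding A_def by auto
  have Bs: "range B \<subseteq> sets M" unfolding B_def by auto
  have Ad: "disjoint_family A" unfolding A_def disjoint_family_on_def by auto
  have Bd: "disjoint_family B" unfolding B_def disjoint_family_on_def by auto
  have UA: "(\<Union>j. A j) = {\<omega>\<in>space M. m < X \<omega>}"
    unfolding A_def by (auto, presburger)
  have sA: "(\<lambda>j. measure M (A j)) sums measure M {\<omega>\<in>space M. m < X \<omega>}"
    using finite_measure_UNION[OF As Ad] UA by simp
  have sB: "(\<lambda>j. measure M (B j)) sums measure M (\<Union>j. B j)"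
    using finite_measure_UNION[OF Bs Bd] by simp
  have sB': "(\<lambda>j. \<mu> / real m * measure M (B j)) sums (\<mu> / real m * measure M (\<Union>j. B j))"
    by (rule sums_mult[OF sB])
  have le: "measure M (A j) \<le> \<mu> / real m * measure M (B j)" for j
  proof -
    have "measure M (A j) = exp (- \<mu>) * \<mu> ^ Suc (m + j) / fact (Suc (m + j))"
      using pm[of "m+1+j"] unfolding A_def by simp
    also have "\<dots> = \<mu> / real (Suc (m + j)) * (exp (- \<mu>) * \<mu> ^ (m + j) / fact (m + j))"
      by (simp add: fact_Suc field_simps del: of_nat_Suc)
    also have "\<dots> \<le> \<mu> / real m * (exp (- \<mu>) * \<mu> ^ (m + j) / fact (m + j))"
      using mu m by (intro mult_right_mono divide_left_mono) auto
    also have "\<dots> = \<mu> / real m * measure M (B j)"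
      using pm[of "m+j"] unfolding B_def by simp
    finally show ?thesis .
  qed
  have "measure M {\<omega>\<in>space M. m < X \<omega>} \<le> \<mu> / real m * measure M (\<Union>j. B j)"
    by (rule sums_le[OF le sA sB'])
  also have "\<dots> \<le> \<mu> / real m * 1"
    using mu m by (intro mult_left_mono) auto
  finally show ?thesis by simp
qed

lemma pois_low:
  assumes P: "prob_space M" and Xm[measurable]: "X \<in> measurable M (count_space UNIV)"
    and pm: "\<And>k. measure M {\<omega>\<in>space M. X \<omega> = k} = exp (- \<mu>) * \<mu> ^ k / fact k"
  shows "measure M {\<omega>\<in>space M. X \<omega> < k} \<le> (\<Sum>j<k. exp (- \<mu>) * \<mu> ^ j / fact j)"
proof -
  interpret prob_space M by (rule P)
  have "{\<omega>\<in>space M. X \<omega> < k} = (\<Union>j\<in>{..<k}. {\<omega>\<in>space M. X \<omega> = j})" by auto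
  then have "measure M {\<omega>\<in>space M. X \<omega> < k} \<le> (\<Sum>j<k. measure M {\<omega>\<in>space M. X \<omega> = j})"
    by (simp only:) (rule finite_measure_subadditive_finite, auto)
  then show ?thesis using pm by simp
qed


lemma measure_cball0:
  assumes "0 \<le> r"
  shows "measure lborel (cball (0::'a::euclidean_space) r) = unit_ball_vol (real DIM('a)) * r ^ DIM('a)"
  using emeasure_cball[OF assms, of "0::'a"] assms
  by (simp add: measure_def enn2real_ennreal)

lemma hppp_lf:
  assumes "hppp M lam Phi" "\<omega> \<in> space M" shows "locfin (Phi \<omega>)"
proof -
  have "finite (Phi \<omega> \<inter> cball 0 r)" for r using assms unfolding hppp_def by auto
  moreover have "{x\<in>Phi \<omega>. norm x \<le> r} = Phi \<omega> \<inter> cball 0 r" for r by (auto simp: mem_cball_0)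
  ultimately show ?thesis unfolding locfin_def by simp
qed

lemma hppp_Nm:
  assumes "hppp M lam Phi"
  shows "(\<lambda>\<omega>. Nr (Phi \<omega>) r) \<in> measurable M (count_space UNIV)"
  using assms unfolding hppp_def Nr_pcount by auto

lemma hppp_Nm_real:
  assumes "hppp M lam Phi"
  shows "(\<lambda>\<omega>. real (Nr (Phi \<omega>) r)) \<in> borel_measurable M"
  by (rule measurable_compose[OF hppp_Nm[OF assms] borel_measurable_count_space])

lemma hppp_pm:
  fixes Phi :: "'b \<Rightarrow> 'a::euclidean_space set"
  assumes "hppp M lam Phi" "0 \<le> r"
  shows "measure M {\<omega>\<in>space M. Nr (Phi \<omega>) r = k} =
     exp (- (lam * unit_ball_vol (real DIM('a)) * r ^ DIM('a))) * (lam * unit_ball_vol (real DIM('a)) * r ^ DIM('a)) ^ k / fact k"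
  using assms(1) measure_cball0[OF assms(2), where 'a='a] unfolding hppp_def Nr_pcount
  by (auto simp: mult.assoc)


lemma AE_inf:
  fixes Phi :: "'b \<Rightarrow> 'a::euclidean_space set"
  assumes P: "prob_space M" and H: "hppp M lam Phi" and lam: "0 < lam"
  shows "AE \<omega> in M. \<forall>k. Sk (Phi \<omega>) k \<noteq> {}"
proof -
  interpret prob_space M by (rule P)
  define V where "V = unit_ball_vol (real DIM('a))"
  define D where "D = DIM('a)"
  have V: "V > 0" unfolding V_def by simp
  have D: "D \<ge> 1" unfolding D_def using DIM_positive[where 'a='a] by linarith
  define mu where "mu n = lam * V * real n ^ D" for n :: nat
  have mu0: "0 \<le> mu n" for n unfolding mu_def using lam V by simp
  have f1: "filterlim (\<lambda>n. (lam * V) * real n) at_top sequentially"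
    by (rule filterlim_tendsto_pos_mult_at_top[OF tendsto_const _ filterlim_real_sequentially])
       (use lam V in simp)
  have mu_top: "filterlim mu at_top sequentially"
  proof (rule filterlim_at_top_mono[OF f1])
    show "\<forall>\<^sub>F n in sequentially. lam * V * real n \<le> mu n"
      unfolding eventually_sequentially mu_def
    proof (intro exI[of _ 1] allI impI)
      fix n :: nat assume "1 \<le> n"
      then have "real n \<le> real n ^ D" using D by (intro self_le_power) auto
      then show "lam * V * real n \<le> lam * V * real n ^ D" using lam V by simp
    qed
  qed
  have lim: "(\<lambda>n. \<Sum>j<k. exp (- mu n) * mu n ^ j / fact j) \<longlonglongrightarrow> 0" for k
  proof (rule tendsto_null_sum)
    fix j assume "j \<in> {..<k}"
    have "(\<lambda>n. mu n ^ j / exp (mu n)) \<longlonglongrightarrow> 0"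
      by (rule filterlim_compose[OF tendsto_power_div_exp_0 mu_top])
    then have "(\<lambda>n. mu n ^ j / exp (mu n) / fact j) \<longlonglongrightarrow> 0"
      by (rule tendsto_divide_zero)
    then show "(\<lambda>n. exp (- mu n) * mu n ^ j / fact j) \<longlonglongrightarrow> 0"
      by (simp add: exp_minus field_simps)
  qed
  have Nm[measurable]: "(\<lambda>\<omega>. real (Nr (Phi \<omega>) r)) \<in> borel_measurable M" for r
    by (rule hppp_Nm_real[OF H])
  have ev: "AE \<omega> in M. \<exists>n::nat. k \<le> Nr (Phi \<omega>) (real n)" for k
  proof -
    define E where "E = {\<omega>\<in>space M. \<forall>n::nat. real (Nr (Phi \<omega>) (real n)) < real k}"
    have Es: "E \<in> sets M" unfolding E_def by measurable
    have "measure M E \<le> (\<Sum>j<k. exp (- mu n) * mu n ^ j / fact j)" for n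
    proof -
      have "{\<omega>\<in>space M. Nr (Phi \<omega>) (real n) < k} = {\<omega>\<in>space M. real (Nr (Phi \<omega>) (real n)) < real k}"
        by auto
      also have "\<dots> \<in> sets M" by measurable
      finally have ss: "{\<omega>\<in>space M. Nr (Phi \<omega>) (real n) < k} \<in> sets M" .
      have "measure M E \<le> measure M {\<omega>\<in>space M. Nr (Phi \<omega>) (real n) < k}"
        by (rule finite_measure_mono[OF _ ss]) (auto simp: E_def)
      also have "\<dots> \<le> (\<Sum>j<k. exp (- mu n) * mu n ^ j / fact j)"
        by (rule pois_low[OF P hppp_Nm[OF H]]) (simp add: hppp_pm[OF H] mu_def V_def D_def)
      finally show ?thesis .
    qed
    then have "measure M E \<le> 0" by (intro LIMSEQ_le_const[OF lim]) auto
    then have "emeasure M E = 0" using Es measure_nonneg[of M E] by (simp add: emeasure_eq_measure)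
    then have "E \<in> null_sets M" using Es by (auto intro: null_setsI)
    then show ?thesis by (rule AE_I') (auto simp: E_def not_le)
  qed
  then have "AE \<omega> in M. \<forall>k. \<exists>n::nat. k \<le> Nr (Phi \<omega>) (real n)"
    by (subst AE_all_countable) auto
  then show ?thesis
  proof (rule eventually_mono)
    fix \<omega> assume a: "\<forall>k. \<exists>n::nat. k \<le> Nr (Phi \<omega>) (real n)"
    show "\<forall>k. Sk (Phi \<omega>) k \<noteq> {}"
    proof
      fix k
      obtain n :: nat where "k \<le> Nr (Phi \<omega>) (real n)" using a by blast
      then have "real n \<in> Sk (Phi \<omega>) k" by (auto simp: Sk_def)
      then show "Sk (Phi \<omega>) k \<noteq> {}" by auto
    qed
  qed
qed


lemma powr_pow_eq: "(2::real) powr (real n * a) = (2 powr a) ^ n"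
  by (simp add: powr_realpow[symmetric] powr_powr mult.commute)

lemma AE_growth:
  fixes Phi :: "'b \<Rightarrow> 'a::euclidean_space set"
  assumes P: "prob_space M" and H: "hppp M lam Phi" and lam: "0 < lam"
    and l': "real DIM('a) < l'"
  shows "AE \<omega> in M. \<exists>n0. \<forall>n\<ge>n0. real (Nr (Phi \<omega>) (2^n)) \<le> 2 powr (real n * l')"
proof -
  interpret prob_space M by (rule P)
  define V where "V = unit_ball_vol (real DIM('a))"
  define D where "D = DIM('a)"
  have V: "V > 0" unfolding V_def by simp
  have D: "D \<ge> 1" unfolding D_def using DIM_positive[where 'a='a] by linarith
  have l'D: "real D < l'" using l' unfolding D_def .
  have l'0: "0 < l'" using D l'D by linarith
  define x where "x n = (2::real) powr (real n * l')" for n :: nat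
  define m where "m n = nat \<lfloor>x n\<rfloor>" for n
  have x1: "1 \<le> x n" for n unfolding x_def using l'0 by (intro ge_one_powr_ge_zero) auto
  have mx: "x n / 2 \<le> real (m n)" for n
  proof -
    have "real (m n) = of_int \<lfloor>x n\<rfloor>" unfolding m_def using x1[of n] by simp
    moreover have "x n / 2 \<le> of_int \<lfloor>x n\<rfloor>"
    proof (cases "x n < 2")
      case True
      have "1 \<le> \<lfloor>x n\<rfloor>" using x1[of n] by simp
      then show ?thesis using True by linarith
    next
      case False
      then show ?thesis using floor_correct[of "x n"] by linarith
    qed
    ultimately show ?thesis by simp
  qed
  have mle: "real (m n) \<le> x n" for n unfolding m_def using x1[of n] by simp
  have mpos: "0 < m n" for n using mx[of n] x1[of n] by (cases "m n") auto
  define mu where "mu n = lam * V * ((2::real)^n) ^ D" for n :: nat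
  have mu0: "0 \<le> mu n" for n unfolding mu_def using lam V by simp
  define A where "A n = {\<omega>\<in>space M. m n < Nr (Phi \<omega>) (2^n)}" for n
  have Nm[measurable]: "(\<lambda>\<omega>. real (Nr (Phi \<omega>) r)) \<in> borel_measurable M" for r
    by (rule hppp_Nm_real[OF H])
  have As[measurable]: "A n \<in> sets M" for n
  proof -
    have "A n = {\<omega>\<in>space M. real (m n) < real (Nr (Phi \<omega>) (2^n))}" unfolding A_def by auto
    also have "\<dots> \<in> sets M" by measurable
    finally show ?thesis .
  qed
  have mA: "measure M (A n) \<le> mu n / real (m n)" for n
    unfolding A_def
    by (rule pois_tail[OF P hppp_Nm[OF H] _ mu0 mpos]) (simp add: hppp_pm[OF H] mu_def V_def D_def)
  define c where "c = (2::real) powr (real D - l')"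
  have c0: "0 \<le> c" "c < 1" unfolding c_def using l'D by (auto intro: powr_less_one)
  have bnd: "measure M (A n) \<le> 2 * lam * V * c ^ n" for n
  proof -
    have xp: "0 < x n" using x1[of n] by simp
    have "measure M (A n) \<le> mu n / real (m n)" by (rule mA)
    also have "\<dots> \<le> mu n / (x n / 2)"
      using mx[of n] xp mu0[of n] by (intro divide_left_mono) auto
    also have "\<dots> = 2 * lam * V * (2 powr (real n * real D) / x n)"
      unfolding mu_def using xp
      by (simp add: power_mult[symmetric] powr_realpow[symmetric] powr_powr mult.commute)
    also have "2 powr (real n * real D) / x n = c ^ n"
      unfolding x_def c_def by (simp add: powr_diff[symmetric] right_diff_distrib powr_pow_eq[symmetric])
    finally show ?thesis .
  qed
  have sg: "summable (\<lambda>n. 2 * lam * V * c ^ n)"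
    using c0 by (intro summable_mult summable_geometric) auto
  have sA: "summable (\<lambda>n. measure M (A n))"
    by (rule summable_comparison_test[OF _ sg]) (use bnd in auto)
  have "AE \<omega> in M. eventually (\<lambda>n. \<omega> \<in> space M - A n) sequentially"
    by (rule borel_cantelli_AE1[OF As _ sA]) (simp add: emeasure_eq_measure)
  then show ?thesis
  proof (rule eventually_mono)
    fix \<omega> assume "eventually (\<lambda>n. \<omega> \<in> space M - A n) sequentially"
    then obtain n0 where n0: "\<And>n. n \<ge> n0 \<Longrightarrow> \<omega> \<in> space M - A n"
      unfolding eventually_sequentially by blast
    show "\<exists>n0. \<forall>n\<ge>n0. real (Nr (Phi \<omega>) (2^n)) \<le> 2 powr (real n * l')"
    proof (intro exI[of _ n0] allI impI)
      fix n assume "n0 \<le> n"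
      then have "\<omega> \<in> space M - A n" by (rule n0)
      then have "Nr (Phi \<omega>) (2^n) \<le> m n" unfolding A_def by auto
      then have "real (Nr (Phi \<omega>) (2^n)) \<le> real (m n)" by simp
      also have "\<dots> \<le> x n" by (rule mle)
      finally show "real (Nr (Phi \<omega>) (2^n)) \<le> 2 powr (real n * l')" unfolding x_def .
    qed
  qed
qed


lemma st_from_AE:
  assumes P: "prob_space M" and Ym[measurable]: "Y \<in> borel_measurable M"
    and ae: "AE \<omega> in M. X \<omega> \<le> Y \<omega>"
  shows "st_le M X Y"
  unfolding st_le_def
proof
  fix x :: real
  interpret prob_space M by (rule P)
  obtain N where N: "{\<omega>\<in>space M. \<not> X \<omega> \<le> Y \<omega>} \<subseteq> N" "emeasure M N = 0" "N \<in> sets M"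
    using ae by (rule AE_E)
  have Nn: "N \<in> null_sets M" using N by (auto intro: null_setsI)
  have S: "{\<omega>\<in>space M. x < Y \<omega>} \<in> sets M" by measurable
  have "measure M {\<omega>\<in>space M. x < X \<omega>} \<le> measure M ({\<omega>\<in>space M. x < Y \<omega>} \<union> N)"
    using N(1) S N(3) by (intro finite_measure_mono) force+
  also have "\<dots> = measure M {\<omega>\<in>space M. x < Y \<omega>}" by (rule measure_Un_null_set[OF S Nn])
  finally show "measure M {\<omega>\<in>space M. X \<omega> > x} \<le> measure M {\<omega>\<in>space M. Y \<omega> > x}" by simp
qed

lemma sum_h_two:
  assumes lf: "locfin P" and ne: "\<And>k. Sk P k \<noteq> {}"
    and s: "summable (\<lambda>i. 1 / (ord_dist P (i+2) powr e2))"
  shows "summable (\<lambda>i. 1 / h_two e1 e2 (ord_dist P (i+2)))"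
proof -
  have "eventually (\<lambda>i. 1 / h_two e1 e2 (ord_dist P (i+2)) = 1 / (ord_dist P (i+2) powr e2)) sequentially"
    unfolding eventually_sequentially
  proof (intro exI[of _ "Nr P 2"] allI impI)
    fix i assume "Nr P 2 \<le> i"
    then have "Nr P 2 < i + 2" by simp
    then have "2 \<le> ord_dist P (i+2)" by (rule ord_dist_ge[OF lf ne])
    then show "1 / h_two e1 e2 (ord_dist P (i+2)) = 1 / (ord_dist P (i+2) powr e2)"
      by (simp add: h_two_def)
  qed
  then show ?thesis using s by (subst summable_cong) auto
qed

lemma AE_summable:
  fixes Phi :: "'b \<Rightarrow> 'a::euclidean_space set"
  assumes P: "prob_space M" and H: "hppp M lam Phi" and lam: "0 < lam"
    and e: "real DIM('a) < e"
  shows "AE \<omega> in M. summable (\<lambda>i. 1 / (ord_dist (Phi \<omega>) (i+2) powr e))"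
proof -
  define l' where "l' = (real DIM('a) + e) / 2"
  have l': "real DIM('a) < l'" "l' < e" "0 < l'" using e unfolding l'_def by auto
  have "AE \<omega> in M. \<exists>n0. \<forall>n\<ge>n0. real (Nr (Phi \<omega>) (2^n)) \<le> 2 powr (real n * l')"
    by (rule AE_growth[OF P H lam l'(1)])
  moreover have "AE \<omega> in M. \<forall>k. Sk (Phi \<omega>) k \<noteq> {}" by (rule AE_inf[OF P H lam])
  moreover have "AE \<omega> in M. \<omega> \<in> space M" by (rule AE_space)
  ultimately show ?thesis
  proof eventually_elim
    case (elim \<omega>)
    then obtain n0 where n0: "\<And>n. n \<ge> n0 \<Longrightarrow> real (Nr (Phi \<omega>) (2^n)) \<le> 2 powr (real n * l')" by blast
    show ?case by (rule summable_od[OF hppp_lf[OF H elim(3)] _ l'(3) l'(2) n0]) (use elim in auto)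
  qed
qed

theorem corollary6:
  fixes M :: "'b measure" and Phi :: "'b \<Rightarrow> 'a::euclidean_space set"
    and lam0 e1 e2 :: real
  assumes "prob_space M"
    and "DIM('a) \<in> {1, 2, 3}"
    and "lam0 > 0"
    and "hppp M lam0 Phi"
  shows "(e2 > e1 \<and> e1 > real DIM('a) \<longrightarrow>
            st_le M (\<lambda>\<omega>. CI (h_one e1) (Phi \<omega>)) (\<lambda>\<omega>. CI (h_two e1 e2) (Phi \<omega>))) \<and>
         (e1 > e2 \<and> e2 > real DIM('a) \<longrightarrow>
            st_le M (\<lambda>\<omega>. CI (h_two e1 e2) (Phi \<omega>)) (\<lambda>\<omega>. CI (h_one e1) (Phi \<omega>)))"
proof -
  note P = assms(1) and H = assms(4) and lam = assms(3)
  have lf: "\<And>\<omega>. \<omega> \<in> space M \<Longrightarrow> locfin (Phi \<omega>)" by (rule hppp_lf[OF H])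
  have Nm: "\<And>r. (\<lambda>\<omega>. real (Nr (Phi \<omega>) r)) \<in> borel_measurable M" by (rule hppp_Nm_real[OF H])
  have m1: "(\<lambda>\<omega>. CI (h_one e1) (Phi \<omega>)) \<in> borel_measurable M"
    by (rule CI_meas[OF lf Nm h_one_meas])
  have m2: "(\<lambda>\<omega>. CI (h_two e1 e2) (Phi \<omega>)) \<in> borel_measurable M"
    by (rule CI_meas[OF lf Nm h_two_meas])
  have ne: "AE \<omega> in M. \<forall>k. Sk (Phi \<omega>) k \<noteq> {}" by (rule AE_inf[OF P H lam])
  have sp: "AE \<omega> in M. \<omega> \<in> space M" by (rule AE_space)
  have h1nn: "0 \<le> h_one e1 r" for r by (simp add: h_one_def)
  have h2nn: "0 \<le> h_two e1 e2 r" for r by (simp add: h_two_def)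
  show ?thesis
  proof (intro conjI impI)
    assume e: "e1 < e2 \<and> real DIM('a) < e1"
    have s1: "AE \<omega> in M. summable (\<lambda>i. 1 / (ord_dist (Phi \<omega>) (i+2) powr e1))"
      by (rule AE_summable[OF P H lam]) (use e in auto)
    have s2: "AE \<omega> in M. summable (\<lambda>i. 1 / (ord_dist (Phi \<omega>) (i+2) powr e2))"
      by (rule AE_summable[OF P H lam]) (use e in auto)
    have "AE \<omega> in M. CI (h_one e1) (Phi \<omega>) \<le> CI (h_two e1 e2) (Phi \<omega>)"
      using ne sp s1 s2
    proof eventually_elim
      case (elim \<omega>)
      have L: "locfin (Phi \<omega>)" by (rule lf[OF elim(2)])
      have N: "\<And>k. Sk (Phi \<omega>) k \<noteq> {}" using elim(1) by blast
      show ?case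
      proof (rule CI_le_gen[OF L N])
        show "summable (\<lambda>i. 1 / h_one e1 (ord_dist (Phi \<omega>) (i + 2)))"
          using elim(3) by (simp add: h_one_def)
        show "summable (\<lambda>i. 1 / h_two e1 e2 (ord_dist (Phi \<omega>) (i + 2)))"
          by (rule sum_h_two[OF L N elim(4)])
        show "0 \<le> h_one e1 r" for r by (rule h1nn)
        show "0 \<le> h_two e1 e2 r" for r by (rule h2nn)
        show "h_one e1 r = 0" if "0 \<le> r" "h_two e1 e2 r = 0" for r
          using that by (auto simp: h_one_def h_two_def split: if_splits)
        show "1 / h_one e1 r * (1 / h_two e1 e2 R) \<le> 1 / h_two e1 e2 r * (1 / h_one e1 R)"
          if "0 \<le> r" "r \<le> R" for r R
          using cross1[of e1 e2 r R] e that by auto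
      qed
    qed
    then show "st_le M (\<lambda>\<omega>. CI (h_one e1) (Phi \<omega>)) (\<lambda>\<omega>. CI (h_two e1 e2) (Phi \<omega>))"
      by (rule st_from_AE[OF P m2])
  next
    assume e: "e2 < e1 \<and> real DIM('a) < e2"
    have s1: "AE \<omega> in M. summable (\<lambda>i. 1 / (ord_dist (Phi \<omega>) (i+2) powr e1))"
      by (rule AE_summable[OF P H lam]) (use e in auto)
    have s2: "AE \<omega> in M. summable (\<lambda>i. 1 / (ord_dist (Phi \<omega>) (i+2) powr e2))"
      by (rule AE_summable[OF P H lam]) (use e in auto)
    have "AE \<omega> in M. CI (h_two e1 e2) (Phi \<omega>) \<le> CI (h_one e1) (Phi \<omega>)"
      using ne sp s1 s2
    proof eventually_elim
      case (elim \<omega>)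
      have L: "locfin (Phi \<omega>)" by (rule lf[OF elim(2)])
      have N: "\<And>k. Sk (Phi \<omega>) k \<noteq> {}" using elim(1) by blast
      show ?case
      proof (rule CI_le_gen[OF L N])
        show "summable (\<lambda>i. 1 / h_one e1 (ord_dist (Phi \<omega>) (i + 2)))"
          using elim(3) by (simp add: h_one_def)
        show "summable (\<lambda>i. 1 / h_two e1 e2 (ord_dist (Phi \<omega>) (i + 2)))"
          by (rule sum_h_two[OF L N elim(4)])
        show "0 \<le> h_one e1 r" for r by (rule h1nn)
        show "0 \<le> h_two e1 e2 r" for r by (rule h2nn)
        show "h_two e1 e2 r = 0" if "0 \<le> r" "h_one e1 r = 0" for r
          using that by (auto simp: h_one_def h_two_def)
        show "1 / h_two e1 e2 r * (1 / h_one e1 R) \<le> 1 / h_one e1 r * (1 / h_two e1 e2 R)"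
          if "0 \<le> r" "r \<le> R" for r R
          using cross2[of e2 e1 r R] e that by auto
      qed
    qed
    then show "st_le M (\<lambda>\<omega>. CI (h_two e1 e2) (Phi \<omega>)) (\<lambda>\<omega>. CI (h_one e1) (Phi \<omega>))"
      by (rule st_from_AE[OF P m1])
  qed
qed


end
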